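(* Let $\mathbf{RN}$ be a regulatory network, $z$ a regular parameter and $\ell$ the associated wall-labeling. Let $\mathcal F_W$, $\mathcal F_{WD}$ and $\mathcal F_D$ be the wall graph, wall-domain graph and domain graph induced by $\ell$. Then the Morse graphs $\mathsf{MG}(\mathcal F_W)$, $\mathsf{MG}(\mathcal F_{WD})$ and $\mathsf{MG}(\mathcal F_D)$ are isomorphic.
   Context: Regulatory network: $\mathbf{RN}=(V,E)$, $V=\{1,\dots,N\}$. Edges $(i,j)$ are activations $i\to j$ or repressions $i\dashv j$, with at most one per ordered pair and (standing assumption) no $i\dashv i$. Set $\mathbf S(n)=\{i:(i,n)\in E\}$ and $\mathbf T(n)=\{j:(n,j)\in E\}$. Node $j$ has a logic $M_j$ (the polynomial from an AND/OR expression without negation using each variable of $\mathbf S(j)$ once, via AND $\mapsto$ product and OR $\mapsto$ sum). Parameter: $z=(l,u,\theta,\gamma)$, consisting of $l_{j,i},u_{j,i},\theta_{j,i}$ per edge $(i,j)$ and $\gamma_i$ per node. Switching nonlinearity: $\sigma_{j,i}(x)=l_{j,i}$ if ($i\to j$, $x_i<\theta_{j,i}$) or ($i\dashv j$, $x_i>\theta_{j,i}$). It equals $u_{j,i}$ if ($i\to j$, $x_i>\theta_{j,i}$) or ($i\dashv j$, $x_i<\theta_{j,i}$). $\Lambda_j(x)=M_j((\sigma_{j,i}(x))_{i\in\mathbf S(j)})$. Fundamental cells: with $\theta_{-\infty,i}=0$ and $\theta_{\infty,i}=\infty$, a cell is $\kappa=\prod_i(\theta_{a_i,i},\theta_{b_i,i})$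 with consecutive thresholds. $\Lambda(\kappa)$ is the constant value of $\Lambda$ on $\kappa$. Left faces (for $a_k\in V$) replace the $k$-th factor by $\{\theta_{a_k,k}\}$; right faces (for $b_k\in V$) use $\{\theta_{b_k,k}\}$. Each face has projection index $k$ and switching index $a_k$ resp. $b_k$. Regular parameter: - $0<l<u$, $\gamma>0$ and $\theta>0$; - distinct $\theta_{j,i}$ for fixed $i$; - $\Lambda_i(\kappa)\ne\gamma_i\theta_{j,i}$ for each face threshold $\theta_{j,i}$ of $\kappa$. A cell $\kappa$ is attracting if $\Gamma^{-1}\Lambda(\kappa)\in\kappa$, where $\Gamma=\mathrm{diag}(\gamma_i)$. Walls: a wall is a pair $(\tau,\kappa)$ with $\tau$ a face of $\kappa$. $\mathrm{sgn}(\tau,\kappa)=\pm1$ for left/right faces. $\ell(\tau,\kappa)=\mathrm{sgn}(\tau,\kappa)\,\mathrm{sgn}(-\gamma_i\theta_{j,i}+\Lambda_i(\kappa))$ ($i$ projection index, $j$ switching index). $\ell=1$ means entrance and $\ell=-1$ absorbing. Wall graph: its vertices are the attracting cells and all faces of all cells. There is an edge $\tau\to\tau'$ whenever some cell $\kappa$ has $(\tau,\kappa)$ entrance and $(\tau',\kappa)$ absorbing. For each attracting $\kappa$ there are edges $\kappa\to\kappa$ and $\tau\to\kappa$ for every wall $(\tau,\kappa)$. Domain graph: its vertices are all cells. There is an edge $\kappa\to\kappa$ if $\kappa$ is attracting, and an edge $\kappa\to\kappa'$ if some face $\tau$ has $(\tau,\kappa)$ absorbing and $(\tau,\kappa')$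 entrance. Wall-domain graph: its vertices are all cells and all faces. There is an edge $\kappa\to\tau$ if $(\tau,\kappa)$ is absorbing, an edge $\tau\to\kappa$ if $(\tau,\kappa)$ is entrance, and an edge $\kappa\to\kappa$ if $\kappa$ is attracting. Morse graph of a directed graph $\mathcal F$: - A recurrent component (Morse set) is a maximal vertex set $\mathcal C$ such that for all $u,v\in\mathcal C$ there is a non-empty path from $u$ to $v$ within $\mathcal C$. - Morse sets are partially ordered by $q\le p$ iff there is a path in $\mathcal F$ from an element of $\mathcal M(p)$ to an element of $\mathcal M(q)$. - $\mathsf{MG}(\mathcal F)$ is the Hasse diagram of this poset. *)

theory Defs
  imports "HOL-Analysis.Analysis"
begin

text \<open>Nodes are the elements of a finite type 'v (playing the role of V = {1..N}).
  An edge (i,j) means i regulates j; Act are the activations i -> j,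
  Rep the repressions i -| j.\<close>

definition src :: "('v \<times> 'v) set \<Rightarrow> 'v \<Rightarrow> 'v set" where
  "src E n = {i. (i, n) \<in> E}"

definition tgt :: "('v \<times> 'v) set \<Rightarrow> 'v \<Rightarrow> 'v set" where
  "tgt E n = {j. (n, j) \<in> E}"

datatype 'v lexpr = LVar 'v | LAnd "'v lexpr" "'v lexpr" | LOr "'v lexpr" "'v lexpr"

fun lvars :: "'v lexpr \<Rightarrow> 'v list" where
  "lvars (LVar i) = [i]"
| "lvars (LAnd e f) = lvars e @ lvars f"
| "lvars (LOr e f) = lvars e @ lvars f"

fun leval :: "('v \<Rightarrow> real) \<Rightarrow> 'v lexpr \<Rightarrow> real" where
  "leval s (LVar i) = s i"
| "leval s (LAnd e f) = leval s e * leval s f"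
| "leval s (LOr e f) = leval s e + leval s f"

definition valid_logic :: "'v set \<Rightarrow> 'v lexpr \<Rightarrow> bool" where
  "valid_logic S e \<longleftrightarrow> distinct (lvars e) \<and> set (lvars e) = S"

definition reg_network :: "('v \<times> 'v) set \<Rightarrow> ('v \<times> 'v) set \<Rightarrow> ('v \<Rightarrow> 'v lexpr) \<Rightarrow> bool" where
  "reg_network Act Rep M \<longleftrightarrow>
     Act \<inter> Rep = {} \<and> (\<forall>i. (i, i) \<notin> Rep) \<and>
     (\<forall>j. valid_logic (src (Act \<union> Rep) j) (M j))"

text \<open>Parameters: l j i, u j i, theta j i stand for l_{j,i}, u_{j,i}, theta_{j,i} for the edge (i,j);
  gamma i for gamma_i. The value of sigma exactly on a threshold is irrelevant
  (it is never used on cells).\<close>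

definition sigma :: "('v \<times> 'v) set \<Rightarrow> ('v \<Rightarrow> 'v \<Rightarrow> real) \<Rightarrow> ('v \<Rightarrow> 'v \<Rightarrow> real) \<Rightarrow> ('v \<Rightarrow> 'v \<Rightarrow> real)
     \<Rightarrow> 'v \<Rightarrow> 'v \<Rightarrow> ('v \<Rightarrow> real) \<Rightarrow> real" where
  "sigma Act l u \<theta> j i x =
     (if (i, j) \<in> Act then (if x i < \<theta> j i then l j i else u j i)
      else (if x i > \<theta> j i then l j i else u j i))"

definition Lam :: "('v \<times> 'v) set \<Rightarrow> ('v \<Rightarrow> 'v lexpr) \<Rightarrow> ('v \<Rightarrow> 'v \<Rightarrow> real) \<Rightarrow> ('v \<Rightarrow> 'v \<Rightarrow> real)
     \<Rightarrow> ('v \<Rightarrow> 'v \<Rightarrow> real) \<Rightarrow> 'v \<Rightarrow> ('v \<Rightarrow> real) \<Rightarrow> real" where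
  "Lam Act M l u \<theta> j x = leval (\<lambda>i. sigma Act l u \<theta> j i x) (M j)"

text \<open>Threshold indices: Minf stands for -infinity (threshold 0), Pinf for +infinity,
  Thr j for theta_{j,i}.\<close>
datatype 'v tidx = Minf | Thr 'v | Pinf

fun thr :: "('v \<Rightarrow> 'v \<Rightarrow> real) \<Rightarrow> 'v \<Rightarrow> 'v tidx \<Rightarrow> ereal" where
  "thr \<theta> i Minf = 0"
| "thr \<theta> i (Thr j) = ereal (\<theta> j i)"
| "thr \<theta> i Pinf = \<infinity>"

type_synonym 'v box = "'v \<Rightarrow> 'v tidx \<times> 'v tidx"

definition is_cell :: "('v \<times> 'v) set \<Rightarrow> ('v \<Rightarrow> 'v \<Rightarrow> real) \<Rightarrow> 'v box \<Rightarrow> bool" where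
  "is_cell E \<theta> \<kappa> \<longleftrightarrow> (\<forall>i.
     (fst (\<kappa> i) = Minf \<or> (\<exists>j. fst (\<kappa> i) = Thr j \<and> j \<in> tgt E i)) \<and>
     (snd (\<kappa> i) = Pinf \<or> (\<exists>j. snd (\<kappa> i) = Thr j \<and> j \<in> tgt E i)) \<and>
     thr \<theta> i (fst (\<kappa> i)) < thr \<theta> i (snd (\<kappa> i)) \<and>
     (\<forall>j\<in>tgt E i. \<not> (thr \<theta> i (fst (\<kappa> i)) < ereal (\<theta> j i) \<and> ereal (\<theta> j i) < thr \<theta> i (snd (\<kappa> i)))))"

definition cell_pts :: "('v \<Rightarrow> 'v \<Rightarrow> real) \<Rightarrow> 'v box \<Rightarrow> ('v \<Rightarrow> real) set" where
  "cell_pts \<theta> \<kappa> = {x. \<forall>i. thr \<theta> i (fst (\<kappa> i)) < ereal (x i) \<and> ereal (x i) < thr \<theta> i (snd (\<kappa> i))}"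

text \<open>Lambda(kappa): the (constant) value of Lambda on the cell.\<close>
definition LamCell :: "('v \<times> 'v) set \<Rightarrow> ('v \<Rightarrow> 'v lexpr) \<Rightarrow> ('v \<Rightarrow> 'v \<Rightarrow> real) \<Rightarrow> ('v \<Rightarrow> 'v \<Rightarrow> real)
     \<Rightarrow> ('v \<Rightarrow> 'v \<Rightarrow> real) \<Rightarrow> 'v \<Rightarrow> 'v box \<Rightarrow> real" where
  "LamCell Act M l u \<theta> j \<kappa> = Lam Act M l u \<theta> j (SOME x. x \<in> cell_pts \<theta> \<kappa>)"

definition attracting where
  "attracting Act Rep M l u \<theta> \<gamma> \<kappa> \<longleftrightarrow> is_cell (Act \<union> Rep) \<theta> \<kappa> \<and>
     (\<lambda>i. LamCell Act M l u \<theta> i \<kappa> / \<gamma> i) \<in> cell_pts \<theta> \<kappa>"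

text \<open>wall E theta tau kappa k j s: tau is a face of the cell kappa, obtained by replacing the k-th
  factor by the threshold theta_{j,k}; k is the projection index, j the switching index, and
  s = sgn(tau,kappa) = 1 for a left face, -1 for a right face.  A face is represented by the box
  of kappa whose k-th coordinate is replaced by (Thr j, Thr j), i.e. by the singleton {theta_{j,k}};
  hence a face shared by two adjacent cells gets the same representation.\<close>
definition wall :: "('v \<times> 'v) set \<Rightarrow> ('v \<Rightarrow> 'v \<Rightarrow> real) \<Rightarrow> 'v box \<Rightarrow> 'v box \<Rightarrow> 'v \<Rightarrow> 'v \<Rightarrow> int \<Rightarrow> bool" where
  "wall E \<theta> \<tau> \<kappa> k j s \<longleftrightarrow> is_cell E \<theta> \<kappa> \<and>
     ((fst (\<kappa> k) = Thr j \<and> s = 1) \<or> (snd (\<kappa> k) = Thr j \<and> s = -1)) \<and>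
     \<tau> = \<kappa>(k := (Thr j, Thr j))"

definition is_face where
  "is_face E \<theta> \<tau> \<longleftrightarrow> (\<exists>\<kappa> k j s. wall E \<theta> \<tau> \<kappa> k j s)"

definition wlabel where
  "wlabel Act Rep M l u \<theta> \<gamma> \<tau> \<kappa> =
     (THE v. \<exists>k j s. wall (Act \<union> Rep) \<theta> \<tau> \<kappa> k j s \<and>
        v = real_of_int s * sgn (- \<gamma> k * \<theta> j k + LamCell Act M l u \<theta> k \<kappa>))"

definition entrance where
  "entrance Act Rep M l u \<theta> \<gamma> \<tau> \<kappa> \<longleftrightarrow>
     (\<exists>k j s. wall (Act \<union> Rep) \<theta> \<tau> \<kappa> k j s) \<and> wlabel Act Rep M l u \<theta> \<gamma> \<tau> \<kappa> = 1"

definition absorbing where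
  "absorbing Act Rep M l u \<theta> \<gamma> \<tau> \<kappa> \<longleftrightarrow>
     (\<exists>k j s. wall (Act \<union> Rep) \<theta> \<tau> \<kappa> k j s) \<and> wlabel Act Rep M l u \<theta> \<gamma> \<tau> \<kappa> = -1"

definition regular_param where
  "regular_param Act Rep M l u \<theta> \<gamma> \<longleftrightarrow>
     (\<forall>(i, j) \<in> Act \<union> Rep. 0 < l j i \<and> l j i < u j i \<and> 0 < \<theta> j i) \<and>
     (\<forall>i. 0 < \<gamma> i) \<and>
     (\<forall>i. inj_on (\<lambda>j. \<theta> j i) (tgt (Act \<union> Rep) i)) \<and>
     (\<forall>\<tau> \<kappa> k j s. wall (Act \<union> Rep) \<theta> \<tau> \<kappa> k j s \<longrightarrow> LamCell Act M l u \<theta> k \<kappa> \<noteq> \<gamma> k * \<theta> j k)"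

datatype 'v vert = Cell "'v box" | Face "'v box"

type_synonym 'a digraph = "'a set \<times> ('a \<times> 'a) set"

definition wall_graph :: "('v \<times> 'v) set \<Rightarrow> ('v \<times> 'v) set \<Rightarrow> ('v \<Rightarrow> 'v lexpr) \<Rightarrow> ('v \<Rightarrow> 'v \<Rightarrow> real)
   \<Rightarrow> ('v \<Rightarrow> 'v \<Rightarrow> real) \<Rightarrow> ('v \<Rightarrow> 'v \<Rightarrow> real) \<Rightarrow> ('v \<Rightarrow> real) \<Rightarrow> 'v vert digraph" where
  "wall_graph Act Rep M l u \<theta> \<gamma> =
    ({Cell \<kappa> | \<kappa>. attracting Act Rep M l u \<theta> \<gamma> \<kappa>} \<union> {Face \<tau> | \<tau>. is_face (Act \<union> Rep) \<theta> \<tau>},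
     {(Face \<tau>, Face \<tau>') | \<tau> \<tau>'. \<exists>\<kappa>. entrance Act Rep M l u \<theta> \<gamma> \<tau> \<kappa> \<and> absorbing Act Rep M l u \<theta> \<gamma> \<tau>' \<kappa>}
     \<union> {(Cell \<kappa>, Cell \<kappa>) | \<kappa>. attracting Act Rep M l u \<theta> \<gamma> \<kappa>}
     \<union> {(Face \<tau>, Cell \<kappa>) | \<tau> \<kappa>. attracting Act Rep M l u \<theta> \<gamma> \<kappa> \<and> (\<exists>k j s. wall (Act \<union> Rep) \<theta> \<tau> \<kappa> k j s)})"

definition domain_graph :: "('v \<times> 'v) set \<Rightarrow> ('v \<times> 'v) set \<Rightarrow> ('v \<Rightarrow> 'v lexpr) \<Rightarrow> ('v \<Rightarrow> 'v \<Rightarrow> real)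
   \<Rightarrow> ('v \<Rightarrow> 'v \<Rightarrow> real) \<Rightarrow> ('v \<Rightarrow> 'v \<Rightarrow> real) \<Rightarrow> ('v \<Rightarrow> real) \<Rightarrow> 'v vert digraph" where
  "domain_graph Act Rep M l u \<theta> \<gamma> =
    ({Cell \<kappa> | \<kappa>. is_cell (Act \<union> Rep) \<theta> \<kappa>},
     {(Cell \<kappa>, Cell \<kappa>) | \<kappa>. attracting Act Rep M l u \<theta> \<gamma> \<kappa>}
     \<union> {(Cell \<kappa>, Cell \<kappa>') | \<kappa> \<kappa>'. \<exists>\<tau>. absorbing Act Rep M l u \<theta> \<gamma> \<tau> \<kappa> \<and> entrance Act Rep M l u \<theta> \<gamma> \<tau> \<kappa>'})"

definition wall_domain_graph :: "('v \<times> 'v) set \<Rightarrow> ('v \<times> 'v) set \<Rightarrow> ('v \<Rightarrow> 'v lexpr) \<Rightarrow> ('v \<Rightarrow> 'v \<Rightarrow> real)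
   \<Rightarrow> ('v \<Rightarrow> 'v \<Rightarrow> real) \<Rightarrow> ('v \<Rightarrow> 'v \<Rightarrow> real) \<Rightarrow> ('v \<Rightarrow> real) \<Rightarrow> 'v vert digraph" where
  "wall_domain_graph Act Rep M l u \<theta> \<gamma> =
    ({Cell \<kappa> | \<kappa>. is_cell (Act \<union> Rep) \<theta> \<kappa>} \<union> {Face \<tau> | \<tau>. is_face (Act \<union> Rep) \<theta> \<tau>},
     {(Cell \<kappa>, Face \<tau>) | \<kappa> \<tau>. absorbing Act Rep M l u \<theta> \<gamma> \<tau> \<kappa>}
     \<union> {(Face \<tau>, Cell \<kappa>) | \<tau> \<kappa>. entrance Act Rep M l u \<theta> \<gamma> \<tau> \<kappa>}
     \<union> {(Cell \<kappa>, Cell \<kappa>) | \<kappa>. attracting Act Rep M l u \<theta> \<gamma> \<kappa>})"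

definition recurrent_set :: "'a digraph \<Rightarrow> 'a set \<Rightarrow> bool" where
  "recurrent_set F C \<longleftrightarrow> C \<subseteq> fst F \<and> C \<noteq> {} \<and>
     (\<forall>u\<in>C. \<forall>v\<in>C. (u, v) \<in> (snd F \<inter> (C \<times> C))\<^sup>+)"

definition morse_sets :: "'a digraph \<Rightarrow> 'a set set" where
  "morse_sets F = {C. recurrent_set F C \<and> (\<forall>D. recurrent_set F D \<and> C \<subseteq> D \<longrightarrow> D = C)}"

definition morse_le :: "'a digraph \<Rightarrow> 'a set \<Rightarrow> 'a set \<Rightarrow> bool" where
  "morse_le F q p \<longleftrightarrow> (\<exists>x\<in>p. \<exists>y\<in>q. (x, y) \<in> (snd F)\<^sup>*)"

definition mg_edge :: "'a digraph \<Rightarrow> 'a set \<Rightarrow> 'a set \<Rightarrow> bool" where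
  "mg_edge F p q \<longleftrightarrow> p \<in> morse_sets F \<and> q \<in> morse_sets F \<and>
     morse_le F q p \<and> q \<noteq> p \<and>
     \<not> (\<exists>r\<in>morse_sets F. morse_le F q r \<and> morse_le F r p \<and> r \<noteq> q \<and> r \<noteq> p)"

definition mg_isomorphic :: "'a digraph \<Rightarrow> 'b digraph \<Rightarrow> bool" where
  "mg_isomorphic F G \<longleftrightarrow> (\<exists>f. bij_betw f (morse_sets F) (morse_sets G) \<and>
     (\<forall>p\<in>morse_sets F. \<forall>q\<in>morse_sets F. mg_edge F p q \<longleftrightarrow> mg_edge G (f p) (f q)))"

end

theory Submission imports Defs begin

definition Rv :: "'a digraph \<Rightarrow> 'a set" where
  "Rv F = {x \<in> fst F. (x,x) \<in> (snd F)\<^sup>+}"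
definition cls :: "'a digraph \<Rightarrow> 'a \<Rightarrow> 'a set" where
  "cls F x = {y. (x,y) \<in> (snd F)\<^sup>+ \<and> (y,x) \<in> (snd F)\<^sup>+}"

lemma path_within:
  assumes "(a,b) \<in> E\<^sup>+" "(x,a) \<in> E\<^sup>+"
  shows "(b,x) \<in> E\<^sup>+ \<longrightarrow> (a,b) \<in> (E \<inter> ({y. (x,y)\<in>E\<^sup>+ \<and> (y,x)\<in>E\<^sup>+} \<times> {y. (x,y)\<in>E\<^sup>+ \<and> (y,x)\<in>E\<^sup>+}))\<^sup>+"
  using assms(1)
proof (induction rule: trancl_induct)
  case (base b)
  show ?case
  proof
    assume bx: "(b,x) \<in> E\<^sup>+"
    have ax: "(a,x) \<in> E\<^sup>+" using base bx by (rule trancl_into_trancl2)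
    have xb: "(x,b) \<in> E\<^sup>+" using assms(2) base by (rule trancl_into_trancl)
    show "(a, b) \<in> (E \<inter> ({y. (x,y)\<in>E\<^sup>+ \<and> (y,x)\<in>E\<^sup>+} \<times> {y. (x,y)\<in>E\<^sup>+ \<and> (y,x)\<in>E\<^sup>+}))\<^sup>+"
      using base bx ax xb assms(2) by (intro r_into_trancl) blast
  qed
next
  case (step c d)
  show ?case
  proof
    assume dx: "(d,x) \<in> E\<^sup>+"
    have cx: "(c,x) \<in> E\<^sup>+" using step dx by (meson trancl_into_trancl2)
    have ac: "(x,c) \<in> E\<^sup>+" using assms(2) step(1) by (rule trancl_trans)
    have ad: "(x,d) \<in> E\<^sup>+" using ac step(2) by (rule trancl_into_trancl)
    have IH: "(a, c) \<in> (E \<inter> ({y. (x,y)\<in>E\<^sup>+ \<and> (y,x)\<in>E\<^sup>+} \<times> {y. (x,y)\<in>E\<^sup>+ \<and> (y,x)\<in>E\<^sup>+}))\<^sup>+"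
      using step(3) cx by blast
    have e: "(c, d) \<in> E \<inter> ({y. (x,y)\<in>E\<^sup>+ \<and> (y,x)\<in>E\<^sup>+} \<times> {y. (x,y)\<in>E\<^sup>+ \<and> (y,x)\<in>E\<^sup>+})"
      using step(2) cx dx ac ad by blast
    show "(a, d) \<in> (E \<inter> ({y. (x,y)\<in>E\<^sup>+ \<and> (y,x)\<in>E\<^sup>+} \<times> {y. (x,y)\<in>E\<^sup>+ \<and> (y,x)\<in>E\<^sup>+}))\<^sup>+"
      using IH e by (rule trancl_into_trancl)
  qed
qed

lemma cls_recurrent:
  assumes EV: "snd F \<subseteq> fst F \<times> fst F" and x: "x \<in> Rv F"
  shows "recurrent_set F (cls F x)"
proof -
  have "cls F x \<subseteq> fst F" using EV by (auto simp: cls_def dest: tranclD2)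
  moreover have "x \<in> cls F x" using x by (auto simp: Rv_def cls_def)
  moreover have "\<forall>a\<in>cls F x. \<forall>b\<in>cls F x. (a,b) \<in> (snd F \<inter> (cls F x \<times> cls F x))\<^sup>+"
  proof (intro ballI)
    fix a b assume a: "a \<in> cls F x" and b: "b \<in> cls F x"
    have "(a,b) \<in> (snd F)\<^sup>+" using a b by (auto simp: cls_def intro: trancl_trans)
    then show "(a,b) \<in> (snd F \<inter> (cls F x \<times> cls F x))\<^sup>+"
      using path_within[of a b "snd F" x] a b unfolding cls_def by auto
  qed
  ultimately show ?thesis unfolding recurrent_set_def by blast
qed

lemma morse_sets_cls:
  assumes EV: "snd F \<subseteq> fst F \<times> fst F"
  shows "morse_sets F = cls F ` Rv F"
proof
  show "cls F ` Rv F \<subseteq> morse_sets F"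
  proof
    fix C assume "C \<in> cls F ` Rv F"
    then obtain x where x: "x \<in> Rv F" and C: "C = cls F x" by auto
    have xC: "x \<in> C" using x C by (auto simp: Rv_def cls_def)
    have "\<forall>D. recurrent_set F D \<and> C \<subseteq> D \<longrightarrow> D = C"
    proof (intro allI impI)
      fix D assume D: "recurrent_set F D \<and> C \<subseteq> D"
      have "D \<subseteq> C"
      proof
        fix d assume "d \<in> D"
        then have "(x,d) \<in> (snd F)\<^sup>+ \<and> (d,x) \<in> (snd F)\<^sup>+"
          using D xC unfolding recurrent_set_def by (meson Int_lower1 in_mono trancl_mono)
        then show "d \<in> C" using C by (auto simp: cls_def)
      qed
      then show "D = C" using D by auto
    qed
    then show "C \<in> morse_sets F" using cls_recurrent[OF EV x] C by (auto simp: morse_sets_def)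
  qed
next
  show "morse_sets F \<subseteq> cls F ` Rv F"
  proof
    fix C assume C: "C \<in> morse_sets F"
    then obtain x where xC: "x \<in> C" by (auto simp: morse_sets_def recurrent_set_def)
    have rec: "recurrent_set F C" using C by (auto simp: morse_sets_def)
    have sub: "\<And>a b. a \<in> C \<Longrightarrow> b \<in> C \<Longrightarrow> (a,b) \<in> (snd F)\<^sup>+"
      using rec unfolding recurrent_set_def by (meson Int_lower1 in_mono trancl_mono)
    have x: "x \<in> Rv F" using xC sub rec by (auto simp: Rv_def recurrent_set_def)
    have "C \<subseteq> cls F x" using xC sub by (auto simp: cls_def)
    then have "cls F x = C" using C cls_recurrent[OF EV x] by (auto simp: morse_sets_def)
    then show "C \<in> cls F ` Rv F" using x by auto
  qed
qed


lemma mg_iso_by_order: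
  assumes bij: "bij_betw f (morse_sets F) (morse_sets G)"
    and le: "\<And>p q. p \<in> morse_sets F \<Longrightarrow> q \<in> morse_sets F \<Longrightarrow> morse_le F q p \<longleftrightarrow> morse_le G (f q) (f p)"
  shows "mg_isomorphic F G"
  unfolding mg_isomorphic_def
proof (intro exI conjI ballI)
  show "bij_betw f (morse_sets F) (morse_sets G)" by fact
  fix p q assume p: "p \<in> morse_sets F" and q: "q \<in> morse_sets F"
  have injo: "inj_on f (morse_sets F)" using bij by (simp add: bij_betw_def)
  have inj: "\<And>a b. a \<in> morse_sets F \<Longrightarrow> b \<in> morse_sets F \<Longrightarrow> f a = f b \<longleftrightarrow> a = b"
    using injo by (simp add: inj_on_eq_iff)
  have img: "f ` morse_sets F = morse_sets G" using bij by (simp add: bij_betw_def)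
  have ex: "(\<exists>r\<in>morse_sets F. morse_le F q r \<and> morse_le F r p \<and> r \<noteq> q \<and> r \<noteq> p) \<longleftrightarrow>
        (\<exists>r\<in>morse_sets G. morse_le G (f q) r \<and> morse_le G r (f p) \<and> r \<noteq> f q \<and> r \<noteq> f p)"
  proof
    assume "\<exists>r\<in>morse_sets F. morse_le F q r \<and> morse_le F r p \<and> r \<noteq> q \<and> r \<noteq> p"
    then obtain r where r: "r\<in>morse_sets F" "morse_le F q r" "morse_le F r p" "r \<noteq> q" "r \<noteq> p" by blast
    have "f r \<in> morse_sets G" using r(1) img by blast
    moreover have "morse_le G (f q) (f r)" using le[OF r(1) q] r(2) by simp
    moreover have "morse_le G (f r) (f p)" using le[OF p r(1)] r(3) by simp
    moreover have "f r \<noteq> f q" using inj[OF r(1) q] r(4) by simp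
    moreover have "f r \<noteq> f p" using inj[OF r(1) p] r(5) by simp
    ultimately show "\<exists>r\<in>morse_sets G. morse_le G (f q) r \<and> morse_le G r (f p) \<and> r \<noteq> f q \<and> r \<noteq> f p"
      by blast
  next
    assume "\<exists>r\<in>morse_sets G. morse_le G (f q) r \<and> morse_le G r (f p) \<and> r \<noteq> f q \<and> r \<noteq> f p"
    then obtain r' where r': "r'\<in>morse_sets G" "morse_le G (f q) r'" "morse_le G r' (f p)" "r' \<noteq> f q" "r' \<noteq> f p" by blast
    obtain r where r: "r \<in> morse_sets F" "r' = f r" using r'(1) img by blast
    have "morse_le F q r" using le[OF r(1) q] r'(2) r(2) by simp
    moreover have "morse_le F r p" using le[OF p r(1)] r'(3) r(2) by simp
    moreover have "r \<noteq> q" using r'(4) r(2) by blast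
    moreover have "r \<noteq> p" using r'(5) r(2) by blast
    ultimately show "\<exists>r\<in>morse_sets F. morse_le F q r \<and> morse_le F r p \<and> r \<noteq> q \<and> r \<noteq> p"
      using r(1) by blast
  qed
  have fp: "f p \<in> morse_sets G" "f q \<in> morse_sets G" using p q img by blast+
  have ne: "(f q \<noteq> f p) = (q \<noteq> p)" using inj[OF q p] by simp
  show "mg_edge F p q = mg_edge G (f p) (f q)"
    unfolding mg_edge_def le[OF p q] ne ex using p q fp by simp
qed

lemma cls_R:
  assumes EV: "snd F \<subseteq> fst F \<times> fst F" and x: "x \<in> Rv F"
  shows "cls F x \<subseteq> Rv F"
  using EV x by (auto simp: cls_def Rv_def dest: tranclD2 intro: trancl_trans)

lemma mem_cls_iff:
  assumes x: "x \<in> Rv F" and x': "x' \<in> Rv F"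
  shows "x' \<in> cls F x \<longleftrightarrow> (x,x') \<in> (snd F)\<^sup>* \<and> (x',x) \<in> (snd F)\<^sup>*"
  using x x' unfolding cls_def Rv_def
  by (auto dest: rtranclD)

lemma le_cls_iff:
  assumes x: "x \<in> Rv F" and x': "x' \<in> Rv F"
  shows "morse_le F (cls F x') (cls F x) \<longleftrightarrow> (x,x') \<in> (snd F)\<^sup>*"
proof
  assume "morse_le F (cls F x') (cls F x)"
  then obtain a b where "a \<in> cls F x" "b \<in> cls F x'" "(a,b) \<in> (snd F)\<^sup>*"
    by (auto simp: morse_le_def)
  moreover from this have "(x,a) \<in> (snd F)\<^sup>*" "(b,x') \<in> (snd F)\<^sup>*"
    by (auto simp: cls_def intro: trancl_into_rtrancl)
  ultimately show "(x,x') \<in> (snd F)\<^sup>*"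
    by (meson rtrancl_trans)
next
  assume "(x,x') \<in> (snd F)\<^sup>*"
  then show "morse_le F (cls F x') (cls F x)" using x x' unfolding morse_le_def cls_def Rv_def by blast
qed

lemma cls_eq:
  assumes "x' \<in> cls F x" shows "cls F x' = cls F x"
proof -
  from assms have a: "(x,x') \<in> (snd F)\<^sup>+" "(x',x) \<in> (snd F)\<^sup>+" by (auto simp: cls_def)
  show ?thesis
  proof (rule set_eqI)
    fix y
    show "y \<in> cls F x' \<longleftrightarrow> y \<in> cls F x"
    proof
      assume "y \<in> cls F x'"
      then have "(x',y) \<in> (snd F)\<^sup>+" "(y,x') \<in> (snd F)\<^sup>+" by (auto simp: cls_def)
      then have "(x,y) \<in> (snd F)\<^sup>+" "(y,x) \<in> (snd F)\<^sup>+" using a trancl_trans by metis+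
      then show "y \<in> cls F x" by (simp add: cls_def)
    next
      assume "y \<in> cls F x"
      then have "(x,y) \<in> (snd F)\<^sup>+" "(y,x) \<in> (snd F)\<^sup>+" by (auto simp: cls_def)
      then have "(x',y) \<in> (snd F)\<^sup>+" "(y,x') \<in> (snd F)\<^sup>+" using a trancl_trans by metis+
      then show "y \<in> cls F x'" by (simp add: cls_def)
    qed
  qed
qed

lemma transfer:
  assumes EF: "snd F \<subseteq> fst F \<times> fst F" and EG: "snd G \<subseteq> fst G \<times> fst G"
    and rho: "\<rho> \<subseteq> Rv F \<times> Rv G"
    and totF: "\<And>x. x \<in> Rv F \<Longrightarrow> \<exists>y. (x,y) \<in> \<rho>"
    and totG: "\<And>y. y \<in> Rv G \<Longrightarrow> \<exists>x. (x,y) \<in> \<rho>"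
    and reach: "\<And>x y x' y'. (x,y) \<in> \<rho> \<Longrightarrow> (x',y') \<in> \<rho> \<Longrightarrow>
        ((x,x') \<in> (snd F)\<^sup>* \<longleftrightarrow> (y,y') \<in> (snd G)\<^sup>*)"
  shows "mg_isomorphic F G"
proof -
  define f where "f C = \<rho> `` C" for C
  have rhoR: "x \<in> Rv F \<and> y \<in> Rv G" if "(x,y) \<in> \<rho>" for x y using that rho by blast
  have fcls: "f (cls F x) = cls G y" if xy: "(x,y) \<in> \<rho>" for x y
  proof
    have x: "x \<in> Rv F" and y: "y \<in> Rv G" using rhoR[OF xy] by auto
    show "f (cls F x) \<subseteq> cls G y"
    proof
      fix y' assume "y' \<in> f (cls F x)"
      then obtain x' where x': "x' \<in> cls F x" "(x',y') \<in> \<rho>" by (auto simp: f_def)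
      have x'R: "x' \<in> Rv F" and y'R: "y' \<in> Rv G" using rhoR[OF x'(2)] by auto
      have "(x,x') \<in> (snd F)\<^sup>* \<and> (x',x) \<in> (snd F)\<^sup>*" using mem_cls_iff[OF x x'R] x'(1) by simp
      then have "(y,y') \<in> (snd G)\<^sup>* \<and> (y',y) \<in> (snd G)\<^sup>*"
        using reach[OF xy x'(2)] reach[OF x'(2) xy] by simp
      then show "y' \<in> cls G y" using mem_cls_iff[OF y y'R] by simp
    qed
    show "cls G y \<subseteq> f (cls F x)"
    proof
      fix y' assume y': "y' \<in> cls G y"
      then have y'R: "y' \<in> Rv G" using cls_R[OF EG y] by blast
      then obtain x' where x': "(x',y') \<in> \<rho>" using totG by blast
      have x'R: "x' \<in> Rv F" using rhoR[OF x'] by simp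
      have "(y,y') \<in> (snd G)\<^sup>* \<and> (y',y) \<in> (snd G)\<^sup>*" using mem_cls_iff[OF y y'R] y' by simp
      then have "(x,x') \<in> (snd F)\<^sup>* \<and> (x',x) \<in> (snd F)\<^sup>*"
        using reach[OF xy x'] reach[OF x' xy] by simp
      then have "x' \<in> cls F x" using mem_cls_iff[OF x x'R] by simp
      then show "y' \<in> f (cls F x)" using x' unfolding f_def by blast
    qed
  qed
  have MF: "morse_sets F = cls F ` Rv F" and MG: "morse_sets G = cls G ` Rv G"
    using morse_sets_cls[OF EF] morse_sets_cls[OF EG] by auto
  have bij: "bij_betw f (morse_sets F) (morse_sets G)"
    unfolding bij_betw_def inj_on_def
  proof (intro conjI ballI impI)
    fix p q assume p: "p \<in> morse_sets F" and q: "q \<in> morse_sets F" and eq: "f p = f q"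
    obtain x where x: "x \<in> Rv F" "p = cls F x" using p MF by blast
    obtain x' where x': "x' \<in> Rv F" "q = cls F x'" using q MF by blast
    obtain y where xy: "(x,y) \<in> \<rho>" using totF x(1) by blast
    obtain y' where xy': "(x',y') \<in> \<rho>" using totF x'(1) by blast
    have y: "y \<in> Rv G" and y': "y' \<in> Rv G" using rhoR[OF xy] rhoR[OF xy'] by auto
    have "cls G y = cls G y'" using eq fcls[OF xy] fcls[OF xy'] x(2) x'(2) by simp
    moreover have "y' \<in> cls G y'" using y' by (simp add: cls_def Rv_def)
    ultimately have "y' \<in> cls G y" by simp
    then have "(y,y') \<in> (snd G)\<^sup>* \<and> (y',y) \<in> (snd G)\<^sup>*" using mem_cls_iff[OF y y'] by simp
    then have "(x,x') \<in> (snd F)\<^sup>* \<and> (x',x) \<in> (snd F)\<^sup>*"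
      using reach[OF xy xy'] reach[OF xy' xy] by simp
    then have "x' \<in> cls F x" using mem_cls_iff[OF x(1) x'(1)] by simp
    then have "cls F x' = cls F x" by (rule cls_eq)
    then show "p = q" using x(2) x'(2) by simp
  next
    show "f ` morse_sets F = morse_sets G"
    proof
      show "f ` morse_sets F \<subseteq> morse_sets G"
      proof
        fix C assume "C \<in> f ` morse_sets F"
        then obtain p where p: "p \<in> morse_sets F" "C = f p" by blast
        obtain x where x: "x \<in> Rv F" "p = cls F x" using p(1) MF by blast
        obtain y where xy: "(x,y) \<in> \<rho>" using totF x(1) by blast
        have "C = cls G y" using p(2) x(2) fcls[OF xy] by simp
        moreover have "y \<in> Rv G" using rhoR[OF xy] by simp
        ultimately show "C \<in> morse_sets G" using MG by simp
      qed
      show "morse_sets G \<subseteq> f ` morse_sets F"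
      proof
        fix C assume "C \<in> morse_sets G"
        then obtain y where y: "y \<in> Rv G" "C = cls G y" using MG by blast
        obtain x where xy: "(x,y) \<in> \<rho>" using totG y(1) by blast
        have "x \<in> Rv F" using rhoR[OF xy] by simp
        then have "cls F x \<in> morse_sets F" using MF by simp
        moreover have "C = f (cls F x)" using fcls[OF xy] y(2) by simp
        ultimately show "C \<in> f ` morse_sets F" by blast
      qed
    qed
  qed
  show ?thesis
  proof (rule mg_iso_by_order[OF bij])
    fix p q assume p: "p \<in> morse_sets F" and q: "q \<in> morse_sets F"
    obtain x where x: "x \<in> Rv F" "p = cls F x" using p MF by blast
    obtain x' where x': "x' \<in> Rv F" "q = cls F x'" using q MF by blast
    obtain y where xy: "(x,y) \<in> \<rho>" using totF x(1) by blast
    obtain y' where xy': "(x',y') \<in> \<rho>" using totF x'(1) by blast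
    have y: "y \<in> Rv G" and y': "y' \<in> Rv G" using rhoR[OF xy] rhoR[OF xy'] by auto
    have "morse_le F q p \<longleftrightarrow> (x,x') \<in> (snd F)\<^sup>*" using le_cls_iff[OF x(1) x'(1)] x(2) x'(2) by simp
    also have "\<dots> \<longleftrightarrow> (y,y') \<in> (snd G)\<^sup>*" using reach[OF xy xy'] .
    also have "\<dots> \<longleftrightarrow> morse_le G (cls G y') (cls G y)" using le_cls_iff[OF y y'] by simp
    also have "\<dots> \<longleftrightarrow> morse_le G (f q) (f p)" using fcls[OF xy] fcls[OF xy'] x(2) x'(2) by simp
    finally show "morse_le F q p = morse_le G (f q) (f p)" .
  qed
qed

lemma mg_iso_trans:
  assumes "mg_isomorphic F G" "mg_isomorphic G H"
  shows "mg_isomorphic F H"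
proof -
  obtain f where f: "bij_betw f (morse_sets F) (morse_sets G)"
    "\<forall>p\<in>morse_sets F. \<forall>q\<in>morse_sets F. mg_edge F p q \<longleftrightarrow> mg_edge G (f p) (f q)"
    using assms(1) unfolding mg_isomorphic_def by blast
  obtain g where g: "bij_betw g (morse_sets G) (morse_sets H)"
    "\<forall>p\<in>morse_sets G. \<forall>q\<in>morse_sets G. mg_edge G p q \<longleftrightarrow> mg_edge H (g p) (g q)"
    using assms(2) unfolding mg_isomorphic_def by blast
  have B: "bij_betw (g \<circ> f) (morse_sets F) (morse_sets H)" using bij_betw_trans[OF f(1) g(1)] .
  have E: "\<forall>p\<in>morse_sets F. \<forall>q\<in>morse_sets F. mg_edge F p q \<longleftrightarrow> mg_edge H ((g\<circ>f) p) ((g\<circ>f) q)"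
  proof (intro ballI)
    fix p q assume p: "p \<in> morse_sets F" and q: "q \<in> morse_sets F"
    have fp: "f p \<in> morse_sets G" using bij_betw_apply[OF f(1) p] .
    have fq: "f q \<in> morse_sets G" using bij_betw_apply[OF f(1) q] .
    have "mg_edge F p q \<longleftrightarrow> mg_edge G (f p) (f q)" using f(2) p q by blast
    also have "\<dots> \<longleftrightarrow> mg_edge H (g (f p)) (g (f q))" using g(2) fp fq by blast
    finally show "mg_edge F p q \<longleftrightarrow> mg_edge H ((g\<circ>f) p) ((g\<circ>f) q)" by simp
  qed
  show ?thesis unfolding mg_isomorphic_def by (rule exI[of _ "g \<circ> f"]) (rule conjI[OF B E])
qed


context
  fixes Act Rep :: "('v \<times> 'v) set" and M :: "'v \<Rightarrow> 'v lexpr"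
    and l u \<theta> :: "'v \<Rightarrow> 'v \<Rightarrow> real" and \<gamma> :: "'v \<Rightarrow> real"
  assumes gpos: "\<forall>i. 0 < \<gamma> i"
begin

abbreviation "ATT \<equiv> attracting Act Rep M l u \<theta> \<gamma>"
abbreviation "ENT \<equiv> entrance Act Rep M l u \<theta> \<gamma>"
abbreviation "ABS \<equiv> absorbing Act Rep M l u \<theta> \<gamma>"
abbreviation "WG \<equiv> wall_graph Act Rep M l u \<theta> \<gamma>"
abbreviation "WDG \<equiv> wall_domain_graph Act Rep M l u \<theta> \<gamma>"
abbreviation "DG \<equiv> domain_graph Act Rep M l u \<theta> \<gamma>"

lemma att_lab:
  assumes "ATT \<kappa>" "wall (Act \<union> Rep) \<theta> \<tau> \<kappa> k j s"
  shows "real_of_int s * sgn (- \<gamma> k * \<theta> j k + LamCell Act M l u \<theta> k \<kappa>) = 1"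
proof -
  define L where "L = LamCell Act M l u \<theta> k \<kappa>"
  have c: "thr \<theta> k (fst (\<kappa> k)) < ereal (L / \<gamma> k) \<and> ereal (L / \<gamma> k) < thr \<theta> k (snd (\<kappa> k))"
    using assms(1) by (auto simp: attracting_def cell_pts_def L_def)
  have g: "0 < \<gamma> k" using gpos by auto
  from assms(2) consider "fst (\<kappa> k) = Thr j" "s = 1" | "snd (\<kappa> k) = Thr j" "s = -1"
    by (auto simp: wall_def)
  then show ?thesis
  proof cases
    case 1
    then have "\<theta> j k < L / \<gamma> k" using c by auto
    then have "\<gamma> k * \<theta> j k < L" using g by (simp add: field_simps)
    then show ?thesis using 1 by (simp add: L_def)
  next
    case 2
    then have "L / \<gamma> k < \<theta> j k" using c by auto
    then have "L < \<gamma> k * \<theta> j k" using g by (simp add: field_simps)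
    then show ?thesis using 2 by (simp add: L_def)
  qed
qed

lemma att_ent:
  assumes "ATT \<kappa>" "wall (Act \<union> Rep) \<theta> \<tau> \<kappa> k j s"
  shows "ENT \<tau> \<kappa>"
proof -
  have "wlabel Act Rep M l u \<theta> \<gamma> \<tau> \<kappa> = 1"
    unfolding wlabel_def
  proof (rule the_equality)
    show "\<exists>k j s. wall (Act \<union> Rep) \<theta> \<tau> \<kappa> k j s \<and>
        1 = real_of_int s * sgn (- \<gamma> k * \<theta> j k + LamCell Act M l u \<theta> k \<kappa>)"
      using assms att_lab by metis
    show "\<And>v. \<exists>k j s. wall (Act \<union> Rep) \<theta> \<tau> \<kappa> k j s \<and>
        v = real_of_int s * sgn (- \<gamma> k * \<theta> j k + LamCell Act M l u \<theta> k \<kappa>) \<Longrightarrow> v = 1"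
      using assms(1) att_lab by metis
  qed
  then show ?thesis using assms unfolding entrance_def by blast
qed

lemma att_not_abs: "ATT \<kappa> \<Longrightarrow> \<not> ABS \<tau> \<kappa>"
  using att_ent unfolding absorbing_def entrance_def by fastforce

lemma ent_wall: "ENT \<tau> \<kappa> \<Longrightarrow> \<exists>k j s. wall (Act \<union> Rep) \<theta> \<tau> \<kappa> k j s"
  by (auto simp: entrance_def)
lemma abs_wall: "ABS \<tau> \<kappa> \<Longrightarrow> \<exists>k j s. wall (Act \<union> Rep) \<theta> \<tau> \<kappa> k j s"
  by (auto simp: absorbing_def)
lemma wall_cf: "wall E \<theta>' \<tau> \<kappa> k j s \<Longrightarrow> is_cell E \<theta>' \<kappa> \<and> is_face E \<theta>' \<tau>"
  by (auto simp: wall_def is_face_def)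
lemma att_cell: "ATT \<kappa> \<Longrightarrow> is_cell (Act \<union> Rep) \<theta> \<kappa>"
  by (auto simp: attracting_def)

lemma WD_E: "(a,b) \<in> snd WDG \<longleftrightarrow> (\<exists>\<kappa> \<tau>. a = Cell \<kappa> \<and> b = Face \<tau> \<and> ABS \<tau> \<kappa>) \<or>
   (\<exists>\<tau> \<kappa>. a = Face \<tau> \<and> b = Cell \<kappa> \<and> ENT \<tau> \<kappa>) \<or> (\<exists>\<kappa>. a = Cell \<kappa> \<and> b = Cell \<kappa> \<and> ATT \<kappa>)"
  by (auto simp: wall_domain_graph_def)
lemma D_E: "(a,b) \<in> snd DG \<longleftrightarrow> (\<exists>\<kappa>. a = Cell \<kappa> \<and> b = Cell \<kappa> \<and> ATT \<kappa>) \<or>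
   (\<exists>\<kappa> \<kappa>' \<tau>. a = Cell \<kappa> \<and> b = Cell \<kappa>' \<and> ABS \<tau> \<kappa> \<and> ENT \<tau> \<kappa>')"
  by (auto simp: domain_graph_def)
lemma W_E: "(a,b) \<in> snd WG \<longleftrightarrow> (\<exists>\<tau> \<tau>' \<kappa>. a = Face \<tau> \<and> b = Face \<tau>' \<and> ENT \<tau> \<kappa> \<and> ABS \<tau>' \<kappa>) \<or>
   (\<exists>\<kappa>. a = Cell \<kappa> \<and> b = Cell \<kappa> \<and> ATT \<kappa>) \<or>
   (\<exists>\<tau> \<kappa> k j s. a = Face \<tau> \<and> b = Cell \<kappa> \<and> ATT \<kappa> \<and> wall (Act \<union> Rep) \<theta> \<tau> \<kappa> k j s)"
  by (auto simp: wall_graph_def)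
lemma WD_V: "x \<in> fst WDG \<longleftrightarrow> (\<exists>\<kappa>. x = Cell \<kappa> \<and> is_cell (Act \<union> Rep) \<theta> \<kappa>) \<or> (\<exists>\<tau>. x = Face \<tau> \<and> is_face (Act \<union> Rep) \<theta> \<tau>)"
  by (auto simp: wall_domain_graph_def)
lemma D_V: "x \<in> fst DG \<longleftrightarrow> (\<exists>\<kappa>. x = Cell \<kappa> \<and> is_cell (Act \<union> Rep) \<theta> \<kappa>)"
  by (auto simp: domain_graph_def)
lemma W_V: "x \<in> fst WG \<longleftrightarrow> (\<exists>\<kappa>. x = Cell \<kappa> \<and> ATT \<kappa>) \<or> (\<exists>\<tau>. x = Face \<tau> \<and> is_face (Act \<union> Rep) \<theta> \<tau>)"
  by (auto simp: wall_graph_def)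

lemma EV_WD: "snd WDG \<subseteq> fst WDG \<times> fst WDG"
  by (auto simp: WD_E WD_V dest!: ent_wall abs_wall wall_cf att_cell)
lemma EV_D: "snd DG \<subseteq> fst DG \<times> fst DG"
  by (auto simp: D_E D_V dest!: ent_wall abs_wall wall_cf att_cell)
lemma EV_W: "snd WG \<subseteq> fst WG \<times> fst WG"
proof
  fix e assume "e \<in> snd WG"
  then obtain a b where ab: "e = (a,b)" "(a,b) \<in> snd WG" by (cases e) auto
  from ab(2) consider (ff) \<tau> \<tau>' \<kappa> where "a = Face \<tau>" "b = Face \<tau>'" "ENT \<tau> \<kappa>" "ABS \<tau>' \<kappa>"
    | (s) \<kappa> where "a = Cell \<kappa>" "b = Cell \<kappa>" "ATT \<kappa>"
    | (fc) \<tau> \<kappa> k j s where "a = Face \<tau>" "b = Cell \<kappa>" "ATT \<kappa>" "wall (Act \<union> Rep) \<theta> \<tau> \<kappa> k j s"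
    unfolding W_E by blast
  then show "e \<in> fst WG \<times> fst WG"
  proof cases
    case ff
    obtain k j s where w1: "wall (Act \<union> Rep) \<theta> \<tau> \<kappa> k j s" using ff ent_wall by blast
    obtain k' j' s' where w2: "wall (Act \<union> Rep) \<theta> \<tau>' \<kappa> k' j' s'" using ff abs_wall by blast
    have "is_face (Act \<union> Rep) \<theta> \<tau>" "is_face (Act \<union> Rep) \<theta> \<tau>'" using wall_cf[OF w1] wall_cf[OF w2] by auto
    then show ?thesis using ab(1) ff by (simp add: W_V)
  next
    case s then show ?thesis using ab(1) by (simp add: W_V)
  next
    case fc then show ?thesis using ab(1) wall_cf[OF fc(4)] by (simp add: W_V)
  qed
qed


lemma WD_to_D:
  assumes "(Cell \<kappa>, y) \<in> (snd WDG)\<^sup>+"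
  shows "(\<forall>\<kappa>'. y = Cell \<kappa>' \<longrightarrow> (Cell \<kappa>, Cell \<kappa>') \<in> (snd DG)\<^sup>+) \<and>
         (\<forall>\<tau>. y = Face \<tau> \<longrightarrow> (\<exists>\<kappa>''. (\<kappa>'' = \<kappa> \<or> (Cell \<kappa>, Cell \<kappa>'') \<in> (snd DG)\<^sup>+) \<and> ABS \<tau> \<kappa>''))"
  using assms
proof (induction rule: trancl_induct)
  case (base y)
  then show ?case by (auto simp: WD_E D_E intro!: r_into_trancl)
next
  case (step y z)
  from step(2) consider (a) \<kappa>1 \<tau> where "y = Cell \<kappa>1" "z = Face \<tau>" "ABS \<tau> \<kappa>1"
    | (b) \<tau> \<kappa>1 where "y = Face \<tau>" "z = Cell \<kappa>1" "ENT \<tau> \<kappa>1"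
    | (c) \<kappa>1 where "y = Cell \<kappa>1" "z = Cell \<kappa>1" "ATT \<kappa>1"
    unfolding WD_E by blast
  then show ?case
  proof cases
    case a
    then show ?thesis using step(3) by auto
  next
    case b
    then obtain \<kappa>'' where k: "\<kappa>'' = \<kappa> \<or> (Cell \<kappa>, Cell \<kappa>'') \<in> (snd DG)\<^sup>+" "ABS \<tau> \<kappa>''" using step(3) by auto
    have e: "(Cell \<kappa>'', Cell \<kappa>1) \<in> snd DG" using k(2) b by (auto simp: D_E)
    show ?thesis using k(1) e b by (auto intro: trancl_into_trancl)
  next
    case c
    then show ?thesis using step(3) by auto
  qed
qed

lemma D_edge_WD: "(a,b) \<in> snd DG \<Longrightarrow> (a,b) \<in> (snd WDG)\<^sup>+"
proof -
  assume "(a,b) \<in> snd DG"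
  then consider (s) \<kappa> where "a = Cell \<kappa>" "b = Cell \<kappa>" "ATT \<kappa>"
    | (t) \<kappa> \<kappa>' \<tau> where "a = Cell \<kappa>" "b = Cell \<kappa>'" "ABS \<tau> \<kappa>" "ENT \<tau> \<kappa>'"
    unfolding D_E by blast
  then show ?thesis
  proof cases
    case s then show ?thesis by (auto simp: WD_E intro!: r_into_trancl)
  next
    case t
    then have "(a, Face \<tau>) \<in> snd WDG" "(Face \<tau>, b) \<in> snd WDG" by (auto simp: WD_E)
    then show ?thesis by auto
  qed
qed

lemma sub_trancl: assumes "\<And>a b. (a,b) \<in> r \<Longrightarrow> (a,b) \<in> s\<^sup>+" and "(x,y) \<in> r\<^sup>+"
  shows "(x,y) \<in> s\<^sup>+"
  using assms(2) by (induction rule: trancl_induct) (use assms(1) in \<open>auto intro: trancl_trans\<close>)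

lemma cell_eq: "(Cell \<kappa>, Cell \<kappa>') \<in> (snd WDG)\<^sup>+ \<longleftrightarrow> (Cell \<kappa>, Cell \<kappa>') \<in> (snd DG)\<^sup>+"
  using WD_to_D sub_trancl[OF D_edge_WD] by blast

lemma cell_eq_rt: "(Cell \<kappa>, Cell \<kappa>') \<in> (snd WDG)\<^sup>* \<longleftrightarrow> (Cell \<kappa>, Cell \<kappa>') \<in> (snd DG)\<^sup>*"
  using cell_eq by (metis rtrancl_eq_or_trancl)

lemma iso_WD_D: "mg_isomorphic WDG DG"
proof (rule transfer[OF EV_WD EV_D, where \<rho> = "{(x,y). x \<in> Rv WDG \<and> y \<in> Rv DG \<and> (x,y) \<in> (snd WDG)\<^sup>* \<and> (y,x) \<in> (snd WDG)\<^sup>*}"])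
  show "{(x,y). x \<in> Rv WDG \<and> y \<in> Rv DG \<and> (x,y) \<in> (snd WDG)\<^sup>* \<and> (y,x) \<in> (snd WDG)\<^sup>*} \<subseteq> Rv WDG \<times> Rv DG"
    by auto
next
  fix x assume x: "x \<in> Rv WDG"
  then have xx: "(x,x) \<in> (snd WDG)\<^sup>+" and xv: "x \<in> fst WDG" by (auto simp: Rv_def)
  from xv consider (c) \<kappa> where "x = Cell \<kappa>" "is_cell (Act \<union> Rep) \<theta> \<kappa>" | (f) \<tau> where "x = Face \<tau>"
    unfolding WD_V by blast
  then show "\<exists>y. (x,y) \<in> {(x,y). x \<in> Rv WDG \<and> y \<in> Rv DG \<and> (x,y) \<in> (snd WDG)\<^sup>* \<and> (y,x) \<in> (snd WDG)\<^sup>*}"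
  proof cases
    case c
    then have "x \<in> Rv DG" using xx cell_eq by (auto simp: Rv_def D_V)
    then show ?thesis using x by blast
  next
    case f
    obtain z where z: "(x,z) \<in> snd WDG" "(z,x) \<in> (snd WDG)\<^sup>*" using tranclD[OF xx] by blast
    then obtain \<kappa> where zk: "z = Cell \<kappa>" "ENT \<tau> \<kappa>" using f by (auto simp: WD_E)
    have "(z,z) \<in> (snd WDG)\<^sup>+" using z by (meson rtrancl_into_trancl1)
    then have "(z,z) \<in> (snd DG)\<^sup>+" using zk cell_eq by simp
    moreover have "z \<in> fst DG" using zk by (auto simp: D_V dest!: ent_wall wall_cf)
    ultimately have "z \<in> Rv DG" by (auto simp: Rv_def)
    then show ?thesis using x z by blast
  qed
next
  fix y assume y: "y \<in> Rv DG"
  then obtain \<kappa> where yk: "y = Cell \<kappa>" "is_cell (Act \<union> Rep) \<theta> \<kappa>" by (auto simp: Rv_def D_V)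
  have "(y,y) \<in> (snd DG)\<^sup>+" using y by (auto simp: Rv_def)
  then have "(y,y) \<in> (snd WDG)\<^sup>+" using yk cell_eq by simp
  then have "y \<in> Rv WDG" using yk by (auto simp: Rv_def WD_V)
  then show "\<exists>x. (x,y) \<in> {(x,y). x \<in> Rv WDG \<and> y \<in> Rv DG \<and> (x,y) \<in> (snd WDG)\<^sup>* \<and> (y,x) \<in> (snd WDG)\<^sup>*}"
    using y by blast
next
  fix x y x' y'
  assume xy: "(x,y) \<in> {(x,y). x \<in> Rv WDG \<and> y \<in> Rv DG \<and> (x,y) \<in> (snd WDG)\<^sup>* \<and> (y,x) \<in> (snd WDG)\<^sup>*}"
    and xy': "(x',y') \<in> {(x,y). x \<in> Rv WDG \<and> y \<in> Rv DG \<and> (x,y) \<in> (snd WDG)\<^sup>* \<and> (y,x) \<in> (snd WDG)\<^sup>*}"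
  obtain \<kappa> where k: "y = Cell \<kappa>" using xy by (auto simp: Rv_def D_V)
  obtain \<kappa>' where k': "y' = Cell \<kappa>'" using xy' by (auto simp: Rv_def D_V)
  have "(x,x') \<in> (snd WDG)\<^sup>* \<longleftrightarrow> (y,y') \<in> (snd WDG)\<^sup>*"
    using xy xy' by (auto intro: rtrancl_trans)
  then show "(x,x') \<in> (snd WDG)\<^sup>* \<longleftrightarrow> (y,y') \<in> (snd DG)\<^sup>*"
    using k k' cell_eq_rt by simp
qed


lemma W_edge_WD: "(a,b) \<in> snd WG \<Longrightarrow> (a,b) \<in> (snd WDG)\<^sup>+"
proof -
  assume "(a,b) \<in> snd WG"
  then consider (ff) \<tau> \<tau>' \<kappa> where "a = Face \<tau>" "b = Face \<tau>'" "ENT \<tau> \<kappa>" "ABS \<tau>' \<kappa>"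
    | (s) \<kappa> where "a = Cell \<kappa>" "b = Cell \<kappa>" "ATT \<kappa>"
    | (fc) \<tau> \<kappa> k j s where "a = Face \<tau>" "b = Cell \<kappa>" "ATT \<kappa>" "wall (Act \<union> Rep) \<theta> \<tau> \<kappa> k j s"
    unfolding W_E by blast
  then show ?thesis
  proof cases
    case ff
    then have "(a, Cell \<kappa>) \<in> snd WDG" "(Cell \<kappa>, b) \<in> snd WDG" by (auto simp: WD_E)
    then show ?thesis by auto
  next
    case s then show ?thesis by (auto simp: WD_E intro!: r_into_trancl)
  next
    case fc
    then have "ENT \<tau> \<kappa>" using att_ent by blast
    then show ?thesis using fc by (auto simp: WD_E intro!: r_into_trancl)
  qed
qed

lemma W_cell_att:
  assumes "(x, Cell \<kappa>) \<in> (snd WG)\<^sup>+" shows "ATT \<kappa>"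
proof -
  obtain z where "(z, Cell \<kappa>) \<in> snd WG" using tranclD2[OF assms] by blast
  then show ?thesis by (auto simp: W_E)
qed

lemma WD_to_W:
  assumes x: "x \<in> fst WG" and p: "(x,z) \<in> (snd WDG)\<^sup>+"
  shows "(\<forall>\<tau>. z = Face \<tau> \<longrightarrow> (x,z) \<in> (snd WG)\<^sup>+) \<and>
    (\<forall>\<kappa>. z = Cell \<kappa> \<longrightarrow> (x,z) \<in> (snd WG)\<^sup>+ \<or> (\<exists>\<tau>. (x = Face \<tau> \<or> (x, Face \<tau>) \<in> (snd WG)\<^sup>+) \<and> ENT \<tau> \<kappa>))"
  using p
proof (induction rule: trancl_induct)
  case (base z)
  from base consider (a) \<kappa>1 \<tau> where "x = Cell \<kappa>1" "z = Face \<tau>" "ABS \<tau> \<kappa>1"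
    | (b) \<tau> \<kappa>1 where "x = Face \<tau>" "z = Cell \<kappa>1" "ENT \<tau> \<kappa>1"
    | (c) \<kappa>1 where "x = Cell \<kappa>1" "z = Cell \<kappa>1" "ATT \<kappa>1"
    unfolding WD_E by blast
  then show ?case
  proof cases
    case a
    then have "ATT \<kappa>1" using x by (auto simp: W_V)
    then show ?thesis using a att_not_abs by blast
  next
    case b then show ?thesis by auto
  next
    case c
    then have "(x,z) \<in> snd WG" by (auto simp: W_E)
    then show ?thesis by auto
  qed
next
  case (step y z)
  from step(2) consider (a) \<kappa>1 \<tau> where "y = Cell \<kappa>1" "z = Face \<tau>" "ABS \<tau> \<kappa>1"
    | (b) \<tau> \<kappa>1 where "y = Face \<tau>" "z = Cell \<kappa>1" "ENT \<tau> \<kappa>1"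
    | (c) \<kappa>1 where "y = Cell \<kappa>1" "z = Cell \<kappa>1" "ATT \<kappa>1"
    unfolding WD_E by blast
  then show ?case
  proof cases
    case a
    from step(3) a consider "(x, Cell \<kappa>1) \<in> (snd WG)\<^sup>+"
      | \<tau>0 where "x = Face \<tau>0 \<or> (x, Face \<tau>0) \<in> (snd WG)\<^sup>+" "ENT \<tau>0 \<kappa>1" by blast
    then show ?thesis
    proof cases
      case 1
      then have "ATT \<kappa>1" by (rule W_cell_att)
      then show ?thesis using a att_not_abs by blast
    next
      case 2
      have "(Face \<tau>0, Face \<tau>) \<in> snd WG" using 2 a by (auto simp: W_E)
      then show ?thesis using 2 a by (auto intro: trancl_into_trancl)
    qed
  next
    case b
    then show ?thesis using step(3) by auto
  next
    case c
    then show ?thesis using step(3) by auto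
  qed
qed

lemma WD_W_tr:
  assumes x: "x \<in> fst WG" and x': "x' \<in> fst WG" and p: "(x,x') \<in> (snd WDG)\<^sup>+"
  shows "(x,x') \<in> (snd WG)\<^sup>+"
proof -
  note P = WD_to_W[OF x p]
  from x' consider (c) \<kappa> where "x' = Cell \<kappa>" "ATT \<kappa>" | (f) \<tau> where "x' = Face \<tau>"
    unfolding W_V by blast
  then show ?thesis
  proof cases
    case f then show ?thesis using P by auto
  next
    case c
    from P c consider "(x, x') \<in> (snd WG)\<^sup>+"
      | \<tau> where "x = Face \<tau> \<or> (x, Face \<tau>) \<in> (snd WG)\<^sup>+" "ENT \<tau> \<kappa>" by blast
    then show ?thesis
    proof cases
      case 1 then show ?thesis .
    next
      case 2
      have "(Face \<tau>, x') \<in> snd WG" using 2(2) c by (auto simp: W_E dest!: ent_wall)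
      then show ?thesis using 2(1) by (auto intro: trancl_into_trancl)
    qed
  qed
qed

lemma W_eq_rt:
  assumes x: "x \<in> fst WG" and x': "x' \<in> fst WG"
  shows "(x,x') \<in> (snd WG)\<^sup>* \<longleftrightarrow> (x,x') \<in> (snd WDG)\<^sup>*"
proof -
  have A: "(x,x') \<in> (snd WG)\<^sup>+ \<Longrightarrow> (x,x') \<in> (snd WDG)\<^sup>+" using sub_trancl[OF W_edge_WD] .
  have B: "(x,x') \<in> (snd WDG)\<^sup>+ \<Longrightarrow> (x,x') \<in> (snd WG)\<^sup>+" using WD_W_tr[OF x x'] .
  show ?thesis unfolding rtrancl_eq_or_trancl using A B by blast
qed

lemma WV_sub: "x \<in> fst WG \<Longrightarrow> x \<in> fst WDG"
  by (auto simp: W_V WD_V dest: att_cell)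

lemma iso_W_WD: "mg_isomorphic WG WDG"
proof (rule transfer[OF EV_W EV_WD, where \<rho> = "{(x,y). x \<in> Rv WG \<and> y \<in> Rv WDG \<and> (x,y) \<in> (snd WDG)\<^sup>* \<and> (y,x) \<in> (snd WDG)\<^sup>*}"])
  show "{(x,y). x \<in> Rv WG \<and> y \<in> Rv WDG \<and> (x,y) \<in> (snd WDG)\<^sup>* \<and> (y,x) \<in> (snd WDG)\<^sup>*} \<subseteq> Rv WG \<times> Rv WDG"
    by auto
next
  fix x assume x: "x \<in> Rv WG"
  then have "x \<in> Rv WDG" using WV_sub sub_trancl[OF W_edge_WD] by (auto simp: Rv_def)
  then show "\<exists>y. (x,y) \<in> {(x,y). x \<in> Rv WG \<and> y \<in> Rv WDG \<and> (x,y) \<in> (snd WDG)\<^sup>* \<and> (y,x) \<in> (snd WDG)\<^sup>*}"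
    using x by blast
next
  have face_R: "Face \<tau> \<in> Rv WG" if "Face \<tau> \<in> Rv WDG" for \<tau>
  proof -
    have v: "Face \<tau> \<in> fst WG" using that by (auto simp: Rv_def WD_V W_V)
    then show ?thesis using that WD_W_tr[OF v v] by (auto simp: Rv_def)
  qed
  fix y assume y: "y \<in> Rv WDG"
  then have yy: "(y,y) \<in> (snd WDG)\<^sup>+" and yv: "y \<in> fst WDG" by (auto simp: Rv_def)
  from yv consider (c) \<kappa> where "y = Cell \<kappa>" | (f) \<tau> where "y = Face \<tau>"
    unfolding WD_V by blast
  then show "\<exists>x. (x,y) \<in> {(x,y). x \<in> Rv WG \<and> y \<in> Rv WDG \<and> (x,y) \<in> (snd WDG)\<^sup>* \<and> (y,x) \<in> (snd WDG)\<^sup>*}"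
  proof cases
    case f
    then have "y \<in> Rv WG" using y face_R by simp
    then show ?thesis using y by blast
  next
    case c
    show ?thesis
    proof (cases "ATT \<kappa>")
      case True
      then have "(y,y) \<in> snd WG" "y \<in> fst WG" using c by (auto simp: W_E W_V)
      then have "y \<in> Rv WG" by (auto simp: Rv_def)
      then show ?thesis using y by blast
    next
      case False
      obtain z where z: "(y,z) \<in> snd WDG" "(z,y) \<in> (snd WDG)\<^sup>*" using tranclD[OF yy] by blast
      then obtain \<tau> where zt: "z = Face \<tau>" using c False by (auto simp: WD_E)
      have "(z,z) \<in> (snd WDG)\<^sup>+" using z by (meson rtrancl_into_trancl1)
      moreover have "z \<in> fst WDG" using z(1) EV_WD by auto
      ultimately have zR: "z \<in> Rv WDG" by (auto simp: Rv_def)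
      then have zW: "z \<in> Rv WG" using zt face_R by simp
      have yz: "(y,z) \<in> (snd WDG)\<^sup>*" using z(1) by (rule r_into_rtrancl)
      show ?thesis using zW y yz z(2) by (intro exI[of _ z]) simp
    qed
  qed
next
  fix x y x' y'
  assume xy: "(x,y) \<in> {(x,y). x \<in> Rv WG \<and> y \<in> Rv WDG \<and> (x,y) \<in> (snd WDG)\<^sup>* \<and> (y,x) \<in> (snd WDG)\<^sup>*}"
    and xy': "(x',y') \<in> {(x,y). x \<in> Rv WG \<and> y \<in> Rv WDG \<and> (x,y) \<in> (snd WDG)\<^sup>* \<and> (y,x) \<in> (snd WDG)\<^sup>*}"
  have v: "x \<in> fst WG" "x' \<in> fst WG" using xy xy' by (auto simp: Rv_def)
  have "(x,x') \<in> (snd WDG)\<^sup>* \<longleftrightarrow> (y,y') \<in> (snd WDG)\<^sup>*"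
    using xy xy' by (auto intro: rtrancl_trans)
  then show "(x,x') \<in> (snd WG)\<^sup>* \<longleftrightarrow> (y,y') \<in> (snd WDG)\<^sup>*"
    using W_eq_rt[OF v] by simp
qed

end

theorem proposition3p15:
  fixes Act Rep :: "('v::finite \<times> 'v) set"
    and M :: "'v \<Rightarrow> 'v lexpr"
    and l u \<theta> :: "'v \<Rightarrow> 'v \<Rightarrow> real"
    and \<gamma> :: "'v \<Rightarrow> real"
  assumes "reg_network Act Rep M"
    and "regular_param Act Rep M l u \<theta> \<gamma>"
  shows "mg_isomorphic (wall_graph Act Rep M l u \<theta> \<gamma>) (wall_domain_graph Act Rep M l u \<theta> \<gamma>)
       \<and> mg_isomorphic (wall_domain_graph Act Rep M l u \<theta> \<gamma>) (domain_graph Act Rep M l u \<theta> \<gamma>)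
       \<and> mg_isomorphic (wall_graph Act Rep M l u \<theta> \<gamma>) (domain_graph Act Rep M l u \<theta> \<gamma>)"
proof -
  have g: "\<forall>i. 0 < \<gamma> i" using assms(2) by (simp add: regular_param_def)
  have 1: "mg_isomorphic (wall_graph Act Rep M l u \<theta> \<gamma>) (wall_domain_graph Act Rep M l u \<theta> \<gamma>)"
    using iso_W_WD[OF g] .
  have 2: "mg_isomorphic (wall_domain_graph Act Rep M l u \<theta> \<gamma>) (domain_graph Act Rep M l u \<theta> \<gamma>)"
    using iso_WD_D[OF g] .
  show ?thesis using 1 2 mg_iso_trans by blast
qed

end
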